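(* Let $f:\mathbb{N}\to\mathbb{N}$ satisfy $\lim_{n\to\infty}f(n)=\infty$ and $f(n)=O(n^k)$ for some constant $k$. Then for every $\varepsilon>0$ there is a constant $C$ (depending only on $\varepsilon$ and $f$) such that for every $n$ and every $\mathcal{A}\subseteq\{0,1\}^n$ with $|\mathcal{A}|=f(n)$, there is a first-order sentence over $\tau_{\mathsf{string}}$ with at most $(3+\varepsilon)\log_3(n)+C$ quantifiers that is true in $\mathbf{B}_w$ for all $w\in\mathcal{A}$ and false in $\mathbf{B}_{w'}$ for all $w'\in\{0,1\}^n\setminus\mathcal{A}$.
   Context: Vocabulary $\tau_{\mathsf{string}}=\langle <, S;\ \mathsf{min},\mathsf{max}\rangle$ with $<$ binary, $S$ unary, $\mathsf{min},\mathsf{max}$ constants. A string $w=w_1\cdots w_n\in\{0,1\}^n$ ($n\geq 1$) is encoded by the structure $\mathbf{B}_w$ with universe $\{1,\dots,n\}$, $<$ the usual order, $S=\{i: w_i=1\}$, $\mathsf{min}=1$, $\mathsf{max}=n$. The number of quantifiers is the number of quantifier occurrences. *)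

theory Defs
  imports Complex_Main "HOL-Library.Landau_Symbols"
begin

datatype fo_term = FVar nat | FMin | FMax

datatype fo_formula =
    FLess fo_term fo_term
  | FEq fo_term fo_term
  | FS fo_term
  | FTrue
  | FFalse
  | FNeg fo_formula
  | FConj fo_formula fo_formula
  | FDisj fo_formula fo_formula
  | FImp fo_formula fo_formula
  | FExists nat fo_formula
  | FForall nat fo_formula

fun term_vars :: "fo_term \<Rightarrow> nat set" where
  "term_vars (FVar x) = {x}"
| "term_vars FMin = {}"
| "term_vars FMax = {}"

fun free_vars :: "fo_formula \<Rightarrow> nat set" where
  "free_vars (FLess s t) = term_vars s \<union> term_vars t"
| "free_vars (FEq s t) = term_vars s \<union> term_vars t"
| "free_vars (FS t) = term_vars t"
| "free_vars FTrue = {}"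
| "free_vars FFalse = {}"
| "free_vars (FNeg p) = free_vars p"
| "free_vars (FConj p q) = free_vars p \<union> free_vars q"
| "free_vars (FDisj p q) = free_vars p \<union> free_vars q"
| "free_vars (FImp p q) = free_vars p \<union> free_vars q"
| "free_vars (FExists x p) = free_vars p - {x}"
| "free_vars (FForall x p) = free_vars p - {x}"

definition is_sentence :: "fo_formula \<Rightarrow> bool" where
  "is_sentence p \<longleftrightarrow> free_vars p = {}"

fun num_quant :: "fo_formula \<Rightarrow> nat" where
  "num_quant (FNeg p) = num_quant p"
| "num_quant (FConj p q) = num_quant p + num_quant q"
| "num_quant (FDisj p q) = num_quant p + num_quant q"
| "num_quant (FImp p q) = num_quant p + num_quant q"
| "num_quant (FExists x p) = Suc (num_quant p)"
| "num_quant (FForall x p) = Suc (num_quant p)"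
| "num_quant _ = 0"

text \<open>The structure B_w for a binary string w = w_1...w_n (a bool list, True = 1):
  universe {1..n}, usual order, S = {i. w_i = 1}, min = 1, max = n.
  Position i (1-based) holds the list entry w ! (i-1).\<close>

fun eval_term :: "bool list \<Rightarrow> (nat \<Rightarrow> nat) \<Rightarrow> fo_term \<Rightarrow> nat" where
  "eval_term w a (FVar x) = a x"
| "eval_term w a FMin = 1"
| "eval_term w a FMax = length w"

fun sat :: "bool list \<Rightarrow> (nat \<Rightarrow> nat) \<Rightarrow> fo_formula \<Rightarrow> bool" where
  "sat w a (FLess s t) = (eval_term w a s < eval_term w a t)"
| "sat w a (FEq s t) = (eval_term w a s = eval_term w a t)"
| "sat w a (FS t) = (w ! (eval_term w a t - 1))"
| "sat w a FTrue = True"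
| "sat w a FFalse = False"
| "sat w a (FNeg p) = (\<not> sat w a p)"
| "sat w a (FConj p q) = (sat w a p \<and> sat w a q)"
| "sat w a (FDisj p q) = (sat w a p \<or> sat w a q)"
| "sat w a (FImp p q) = (sat w a p \<longrightarrow> sat w a q)"
| "sat w a (FExists x p) = (\<exists>i\<in>{1..length w}. sat w (a(x := i)) p)"
| "sat w a (FForall x p) = (\<forall>i\<in>{1..length w}. sat w (a(x := i)) p)"

text \<open>Truth of a sentence in B_w (assignment irrelevant for sentences; we use
  the constant assignment to position 1).\<close>
definition models :: "bool list \<Rightarrow> fo_formula \<Rightarrow> bool" where
  "models w p \<longleftrightarrow> sat w (\<lambda>_. 1) p"

end

theory Submission
  imports Defs "HOL-Library.FuncSet"
begin


lemma qf_exists: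
  assumes "finite L" "\<forall>\<phi>\<in>L. num_quant \<phi> = 0 \<and> free_vars \<phi> \<subseteq> V"
  shows "\<And>G. (\<forall>h h'. (\<forall>\<phi>\<in>L. h \<phi> = h' \<phi>) \<longrightarrow> G h = G h') \<Longrightarrow>
     \<exists>\<psi>. num_quant \<psi> = 0 \<and> free_vars \<psi> \<subseteq> V \<and> (\<forall>w a. sat w a \<psi> = G (sat w a))"
  using assms
proof (induction L rule: finite_induct)
  case empty
  then have cst: "\<forall>h h'. G h = G h'" by simp
  then show ?case
  proof (cases "G (\<lambda>_. True)")
    case True
    then have "\<forall>h. G h" using cst by metis
    then show ?thesis by (intro exI[of _ FTrue]) auto
  next
    case False
    then have "\<forall>h. \<not> G h" using cst by metis
    then show ?thesis by (intro exI[of _ FFalse]) auto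
  qed
next
  case (insert \<phi> L)
  define G1 where "G1 h = G (h(\<phi> := True))" for h
  define G0 where "G0 h = G (h(\<phi> := False))" for h
  have i1: "\<forall>h h'. (\<forall>\<phi>\<in>L. h \<phi> = h' \<phi>) \<longrightarrow> G1 h = G1 h'"
  proof (intro allI impI)
    fix h h' :: "fo_formula \<Rightarrow> bool" assume "\<forall>\<psi>\<in>L. h \<psi> = h' \<psi>"
    then have "\<forall>\<psi>\<in>insert \<phi> L. (h(\<phi>:=True)) \<psi> = (h'(\<phi>:=True)) \<psi>" by simp
    then show "G1 h = G1 h'" unfolding G1_def using insert.prems(1) by blast
  qed
  have i0: "\<forall>h h'. (\<forall>\<phi>\<in>L. h \<phi> = h' \<phi>) \<longrightarrow> G0 h = G0 h'"
  proof (intro allI impI)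
    fix h h' :: "fo_formula \<Rightarrow> bool" assume "\<forall>\<psi>\<in>L. h \<psi> = h' \<psi>"
    then have "\<forall>\<psi>\<in>insert \<phi> L. (h(\<phi>:=False)) \<psi> = (h'(\<phi>:=False)) \<psi>" by simp
    then show "G0 h = G0 h'" unfolding G0_def using insert.prems(1) by blast
  qed
  obtain \<psi>1 where p1: "num_quant \<psi>1 = 0 \<and> free_vars \<psi>1 \<subseteq> V \<and> (\<forall>w a. sat w a \<psi>1 = G1 (sat w a))"
    using insert.IH[OF i1] insert.prems(2) by auto
  obtain \<psi>0 where p0: "num_quant \<psi>0 = 0 \<and> free_vars \<psi>0 \<subseteq> V \<and> (\<forall>w a. sat w a \<psi>0 = G0 (sat w a))"
    using insert.IH[OF i0] insert.prems(2) by auto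
  have ph: "num_quant \<phi> = 0 \<and> free_vars \<phi> \<subseteq> V" using insert.prems(2) by auto
  have e1: "G (sat w a) = G1 (sat w a)" if "sat w a \<phi>" for w a
  proof -
    have "(sat w a)(\<phi> := True) = sat w a" using that by (auto simp: fun_eq_iff)
    then show ?thesis unfolding G1_def by simp
  qed
  have e0: "G (sat w a) = G0 (sat w a)" if "\<not> sat w a \<phi>" for w a
  proof -
    have "(sat w a)(\<phi> := False) = sat w a" using that by (auto simp: fun_eq_iff)
    then show ?thesis unfolding G0_def by simp
  qed
  show ?case
    apply (intro exI[of _ "FDisj (FConj \<phi> \<psi>1) (FConj (FNeg \<phi>) \<psi>0)"])
    using p1 p0 ph e1 e0 by auto
qed

fun exs :: "nat list \<Rightarrow> fo_formula \<Rightarrow> fo_formula" where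
  "exs [] p = p"
| "exs (v#vs) p = FExists v (exs vs p)"

lemma exs_nq[simp]: "num_quant (exs vs p) = length vs + num_quant p"
  by (induction vs) auto

lemma exs_fv[simp]: "free_vars (exs vs p) = free_vars p - set vs"
  by (induction vs) auto

lemma exs_intro:
  "sat w b p \<Longrightarrow> \<forall>v\<in>set vs. b v \<in> {1..length w} \<Longrightarrow> \<forall>v. v \<notin> set vs \<longrightarrow> b v = a v
   \<Longrightarrow> sat w a (exs vs p)"
proof (induction vs arbitrary: a)
  case Nil
  then have "b = a" by auto
  then show ?case using Nil by simp
next
  case (Cons v vs)
  have "sat w (a(v := b v)) (exs vs p)"
    using Cons by (intro Cons.IH) auto
  then show ?case using Cons.prems(2) by auto
qed

lemma exs_elim:
  "sat w a (exs vs p) \<Longrightarrow> \<exists>b. (\<forall>v. v \<notin> set vs \<longrightarrow> b v = a v) \<and> sat w b p"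
proof (induction vs arbitrary: a)
  case Nil
  then show ?case by auto
next
  case (Cons v vs)
  then obtain i where "sat w (a(v:=i)) (exs vs p)" by auto
  from Cons.IH[OF this] obtain b where "(\<forall>x. x \<notin> set vs \<longrightarrow> b x = (a(v:=i)) x) \<and> sat w b p" by blast
  then show ?case by (intro exI[of _ b]) auto
qed

fun lev :: "nat \<Rightarrow> nat \<Rightarrow> nat \<Rightarrow> fo_formula \<Rightarrow> fo_formula" where
  "lev B j 0 \<psi> = FForall (B + 3*j) \<psi>"
| "lev B j (Suc k) \<psi> = FExists (B+3*j) (FExists (B+3*j+1) (FForall (B+3*j+2) (lev B (Suc j) k \<psi>)))"

lemma lev_nq[simp]: "num_quant (lev B j k \<psi>) = 3*k + 1 + num_quant \<psi>"
  by (induction k arbitrary: j) auto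

lemma lev_fv: "free_vars (lev B j k \<psi>) \<subseteq> free_vars \<psi> - {B+3*j ..< B+3*(j+k)+1}"
proof (induction k arbitrary: j)
  case 0 then show ?case by auto
next
  case (Suc k)
  have "free_vars (lev B (Suc j) k \<psi>) \<subseteq> free_vars \<psi> - {B+3*(Suc j) ..< B+3*(Suc j+k)+1}"
    by (rule Suc.IH)
  then show ?case by auto
qed

lemma lev_ex:
  assumes "sat w a (lev B j k \<psi>)" "1 \<le> length w" "t \<in> {1..length w}"
  shows "\<exists>a'. (\<forall>v < B+3*j. a' v = a v) \<and> a' (B+3*(j+k)) = t \<and> sat w a' \<psi>"
  using assms
proof (induction k arbitrary: j a)
  case 0
  then have h: "sat w (a(B+3*j := t)) \<psi>" by auto
  have "\<forall>v<B+3*j. (a(B+3*j:=t)) v = a v" "(a(B+3*j:=t)) (B+3*(j+0)) = t" by simp_all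
  then show ?case using h by blast
next
  case (Suc k)
  then obtain x y where "\<forall>u\<in>{1..length w}. sat w (a(B+3*j := x, B+3*j+1 := y, B+3*j+2 := u)) (lev B (Suc j) k \<psi>)"
    by (auto simp del: fun_upd_apply)
  then have "sat w (a(B+3*j := x, B+3*j+1 := y, B+3*j+2 := 1)) (lev B (Suc j) k \<psi>)"
    using Suc.prems(2) by auto
  from Suc.IH[OF this Suc.prems(2,3)] obtain a' where
    "(\<forall>v < B+3*Suc j. a' v = (a(B+3*j := x, B+3*j+1 := y, B+3*j+2 := 1)) v) \<and> a' (B+3*(Suc j+k)) = t \<and> sat w a' \<psi>"
    by blast
  then show ?case by (intro exI[of _ a']) auto
qed

lemma lev_all:
  assumes "\<forall>a'. (\<forall>v < B+3*j. a' v = a v) \<longrightarrow> sat w a' \<psi>" "1 \<le> length w"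
  shows "sat w a (lev B j k \<psi>)"
  using assms
proof (induction k arbitrary: j a)
  case 0
  then show ?case by auto
next
  case (Suc k)
  have "sat w (a(B+3*j := 1, B+3*j+1 := 1, B+3*j+2 := u)) (lev B (Suc j) k \<psi>)" for u
    using Suc by (intro Suc.IH) auto
  moreover have "(1::nat) \<in> {1..length w}" using Suc.prems(2) by simp
  ultimately show ?case
    apply (simp only: lev.simps sat.simps)
    apply (rule bexI[where x=1], rule bexI[where x=1])
    by blast+
qed



definition inT :: "nat \<Rightarrow> fo_term \<Rightarrow> bool" where
  "inT N x = (case x of FVar i \<Rightarrow> i < N | _ \<Rightarrow> True)"

lemma inT_simps[simp]: "inT N (FVar i) = (i < N)" "inT N FMin" "inT N FMax"
  by (auto simp: inT_def)

definition ltH :: "nat \<Rightarrow> (fo_formula \<Rightarrow> bool) \<Rightarrow> fo_term \<Rightarrow> fo_term \<Rightarrow> bool" where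
  "ltH N h x y = (inT N x \<and> inT N y \<and> h (FLess x y))"
definition eqH :: "nat \<Rightarrow> (fo_formula \<Rightarrow> bool) \<Rightarrow> fo_term \<Rightarrow> fo_term \<Rightarrow> bool" where
  "eqH N h x y = (inT N x \<and> inT N y \<and> h (FEq x y))"
definition sbH :: "nat \<Rightarrow> (fo_formula \<Rightarrow> bool) \<Rightarrow> fo_term \<Rightarrow> bool" where
  "sbH N h x = (inT N x \<and> h (FS x))"

definition s1 :: "nat \<Rightarrow> nat" where "s1 l = (l + 2) div 3"
definition s2 :: "nat \<Rightarrow> nat" where "s2 l = (l - s1 l + 1) div 2"

definition leafc :: "(fo_term \<Rightarrow> fo_term \<Rightarrow> bool) \<Rightarrow> (fo_term \<Rightarrow> fo_term \<Rightarrow> bool) \<Rightarrow> (fo_term \<Rightarrow> bool)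
   \<Rightarrow> bool list \<Rightarrow> fo_term \<Rightarrow> nat \<Rightarrow> nat \<Rightarrow> fo_term \<Rightarrow> fo_term \<Rightarrow> bool" where
  "leafc lt eq sb w tt lo hi ta tb =
     (if hi = lo then eq ta tb \<and> sb ta = w!(lo-1)
      else if hi = Suc lo then lt ta tb \<and> \<not> (lt ta tt \<and> lt tt tb) \<and> sb ta = w!(lo-1) \<and> sb tb = w!(hi-1)
      else False)"

fun walk :: "(fo_term \<Rightarrow> fo_term \<Rightarrow> bool) \<Rightarrow> (fo_term \<Rightarrow> fo_term \<Rightarrow> bool) \<Rightarrow> (fo_term \<Rightarrow> bool)
   \<Rightarrow> bool list \<Rightarrow> nat \<Rightarrow> nat \<Rightarrow> nat \<Rightarrow> nat \<Rightarrow> nat \<Rightarrow> fo_term \<Rightarrow> fo_term \<Rightarrow> bool" where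
  "walk lt eq sb w B j 0 lo hi ta tb = leafc lt eq sb w (FVar (B+3*j)) lo hi ta tb"
| "walk lt eq sb w B j (Suc k) lo hi ta tb =
    (if hi \<le> Suc lo then leafc lt eq sb w (FVar (B+3*(j+Suc k))) lo hi ta tb
     else (let x = FVar (B+3*j); y = FVar (B+3*j+1); u = FVar (B+3*j+2);
               lo1 = lo + s1 (hi-lo); lo2 = lo1 + s2 (hi - lo) in
       lt ta x \<and> lt x y \<and> (lt y tb \<or> eq y tb) \<and>
       (if eq u ta then walk lt eq sb w B (Suc j) k lo lo1 ta x
        else if eq u x then walk lt eq sb w B (Suc j) k lo1 lo2 x y
        else if eq u y then walk lt eq sb w B (Suc j) k lo2 hi y tb
        else True)))"

lemma walk_leaf: "hi \<le> Suc lo \<Longrightarrow> walk lt eq sb w B j k lo hi ta tb = leafc lt eq sb w (FVar (B+3*(j+k))) lo hi ta tb"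
  by (cases k) auto

definition Chk :: "nat \<Rightarrow> nat \<Rightarrow> bool list set \<Rightarrow> (bool list \<Rightarrow> nat \<Rightarrow> nat) \<Rightarrow> nat \<Rightarrow> nat \<Rightarrow>
   (fo_term \<Rightarrow> fo_term \<Rightarrow> bool) \<Rightarrow> (fo_term \<Rightarrow> fo_term \<Rightarrow> bool) \<Rightarrow> (fo_term \<Rightarrow> bool) \<Rightarrow> bool" where
  "Chk s q A code m n lt eq sb =
    ((\<forall>j. Suc j < s \<longrightarrow> lt (FVar j) (FVar (Suc j))) \<and>
     (\<exists>w\<in>A. (\<forall>i<q. eq (FVar (s+i)) (FVar (code w i))) \<and> walk lt eq sb w (s+q) 0 m 1 n FMin FMax))"

definition TT :: "nat \<Rightarrow> fo_term set" where "TT N = insert FMin (insert FMax (FVar ` {..<N}))"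

lemma TT_eq: "TT N = {x. inT N x}"
  unfolding TT_def inT_def by (auto split: fo_term.splits) (metis fo_term.exhaust imageI lessThan_iff)

definition atoms :: "nat \<Rightarrow> fo_formula set" where
  "atoms N = (\<lambda>(x,y). FLess x y) ` (TT N \<times> TT N) \<union> (\<lambda>(x,y). FEq x y) ` (TT N \<times> TT N) \<union> FS ` TT N"

lemma atoms_finite: "finite (atoms N)"
  unfolding atoms_def TT_def by auto

lemma term_vars_inT: "inT N x \<Longrightarrow> term_vars x \<subseteq> {..<N}"
  by (cases x) auto

lemma atoms_ok: "\<forall>\<phi>\<in>atoms N. num_quant \<phi> = 0 \<and> free_vars \<phi> \<subseteq> {..<N}"
  unfolding atoms_def TT_eq using term_vars_inT by fastforce

lemma matrix_exists:
  "\<exists>\<psi>. num_quant \<psi> = 0 \<and> free_vars \<psi> \<subseteq> {..<N} \<and>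
     (\<forall>w a. sat w a \<psi> = Chk s q A code m n (ltH N (sat w a)) (eqH N (sat w a)) (sbH N (sat w a)))"
proof -
  let ?G = "\<lambda>h. Chk s q A code m n (ltH N h) (eqH N h) (sbH N h)"
  have "\<forall>h h'. (\<forall>\<phi>\<in>atoms N. h \<phi> = h' \<phi>) \<longrightarrow> ?G h = ?G h'"
  proof (intro allI impI)
    fix h h' :: "fo_formula \<Rightarrow> bool" assume H: "\<forall>\<phi>\<in>atoms N. h \<phi> = h' \<phi>"
    have "ltH N h = ltH N h'" "eqH N h = eqH N h'" "sbH N h = sbH N h'"
      using H unfolding ltH_def eqH_def sbH_def atoms_def TT_eq by (auto simp: fun_eq_iff)
    then show "?G h = ?G h'" by simp
  qed
  from qf_exists[OF atoms_finite atoms_ok this] show ?thesis by blast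
qed

lemma ltH_sat: "ltH N (sat w a) x y = (inT N x \<and> inT N y \<and> eval_term w a x < eval_term w a y)"
  by (simp add: ltH_def)
lemma eqH_sat: "eqH N (sat w a) x y = (inT N x \<and> inT N y \<and> eval_term w a x = eval_term w a y)"
  by (simp add: eqH_def)
lemma sbH_sat: "sbH N (sat w a) x = (inT N x \<and> w ! (eval_term w a x - 1))"
  by (simp add: sbH_def)



definition walkS where
  "walkS N str a w B j k lo hi ta tb = walk (ltH N (sat str a)) (eqH N (sat str a)) (sbH N (sat str a)) w B j k lo hi ta tb"

lemma ev_agree: "inT M t \<Longrightarrow> \<forall>v<M. a' v = a v \<Longrightarrow> eval_term w a' t = eval_term w a t"
  by (cases t) auto

lemma inT_mono: "inT M t \<Longrightarrow> M \<le> M' \<Longrightarrow> inT M' t"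
  by (cases t) auto

lemma walk_step:
  assumes "\<not> hi \<le> Suc lo" "inT (B+3*j) ta" "inT (B+3*j) tb" "B+3*j+3 \<le> N"
    "\<forall>v < B+3*j+3. a' v = (a(B+3*j := x, B+3*j+1 := y, B+3*j+2 := u)) v"
  shows "walkS N str a' w B j (Suc k) lo hi ta tb =
     (eval_term str a ta < x \<and> x < y \<and> y \<le> eval_term str a tb \<and>
       (if u = eval_term str a ta then walkS N str a' w B (Suc j) k lo (lo + s1 (hi-lo)) ta (FVar (B+3*j))
        else if u = x then walkS N str a' w B (Suc j) k (lo + s1 (hi-lo)) (lo + s1 (hi-lo) + s2 (hi-lo)) (FVar (B+3*j)) (FVar (B+3*j+1))
        else if u = y then walkS N str a' w B (Suc j) k (lo + s1 (hi-lo) + s2 (hi-lo)) hi (FVar (B+3*j+1)) tb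
        else True))"
proof -
  have ag: "\<forall>v<B+3*j. a' v = a v" using assms(5) by auto
  have ea: "eval_term str a' ta = eval_term str a ta"
    using ev_agree[OF assms(2) ag] .
  have eb: "eval_term str a' tb = eval_term str a tb"
    using ev_agree[OF assms(3) ag] .
  have ex: "a' (B+3*j) = x" "a' (Suc (B+3*j)) = y" "a' (Suc (Suc (B+3*j))) = u" using assms(5) by auto
  have iN: "inT N ta" "inT N tb" using assms(2,3,4) inT_mono by auto
  have iN2: "B+3*j < N" "B+3*j+1 < N" "B+3*j+2 < N" using assms(4) by auto
  show ?thesis
    unfolding walkS_def using assms(1) iN iN2
    by (simp add: Let_def ltH_sat eqH_sat ea eb ex) (auto)
qed



lemma sound_leaf:
  assumes N: "N = B + 3*m + 1" and len: "length str = n" "1 \<le> n"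
    and jk: "j + k = m" and lh: "1 \<le> lo" "lo \<le> hi" "hi \<le> Suc lo"
    and tv: "inT (B+3*j) ta" "inT (B+3*j) tb" and ev: "1 \<le> eval_term str a ta" "eval_term str a tb \<le> n"
    and M: "\<forall>a'. (\<forall>v<B+3*j. a' v = a v) \<longrightarrow> sat str a' \<psi> = walkS N str a' w0 B j k lo hi ta tb"
    and S: "sat str a (lev B j k \<psi>)"
  shows "eval_term str a ta + (hi-lo) = eval_term str a tb \<and> (\<forall>i\<le>hi-lo. str!(eval_term str a ta + i - 1) = w0!(lo+i-1))"
proof -
  have "B+3*j \<le> N" using N jk by simp
  then have iN: "inT N ta" "inT N tb" using tv inT_mono by blast+
  have tN: "B+3*(j+k) < N" using N jk by simp
  have LF: "\<exists>a'. (\<forall>v<B+3*j. a' v = a v) \<and> a' (B+3*(j+k)) = t \<and>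
      leafc (ltH N (sat str a')) (eqH N (sat str a')) (sbH N (sat str a')) w0 (FVar (B+3*(j+k))) lo hi ta tb"
    if "t \<in> {1..n}" for t
  proof -
    have "1 \<le> length str" "t \<in> {1..length str}" using len that by auto
    from lev_ex[OF S this] obtain a' where a': "(\<forall>v<B+3*j. a' v = a v)" "a' (B+3*(j+k)) = t" "sat str a' \<psi>"
      by blast
    have "walkS N str a' w0 B j k lo hi ta tb" using M a'(1,3) by blast
    then have "leafc (ltH N (sat str a')) (eqH N (sat str a')) (sbH N (sat str a')) w0 (FVar (B+3*(j+k))) lo hi ta tb"
      unfolding walkS_def walk_leaf[OF lh(3)] .
    then show ?thesis using a'(1,2) by blast
  qed
  let ?ea = "eval_term str a ta" and ?eb = "eval_term str a tb"
  have agr: "eval_term str a' ta = ?ea" "eval_term str a' tb = ?eb" if "\<forall>v<B+3*j. a' v = a v" for a'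
    using ev_agree[OF tv(1) that] ev_agree[OF tv(2) that] by auto
  show ?thesis
  proof (cases "hi = lo")
    case True
    obtain a' where a': "(\<forall>v<B+3*j. a' v = a v)"
      "leafc (ltH N (sat str a')) (eqH N (sat str a')) (sbH N (sat str a')) w0 (FVar (B+3*(j+k))) lo hi ta tb"
      using LF[of 1] len by auto
    then show ?thesis using True agr[OF a'(1)] iN unfolding leafc_def
      by (auto simp: eqH_sat sbH_sat)
  next
    case False
    then have hs: "hi = Suc lo" using lh by auto
    obtain a' where a': "(\<forall>v<B+3*j. a' v = a v)"
      "leafc (ltH N (sat str a')) (eqH N (sat str a')) (sbH N (sat str a')) w0 (FVar (B+3*(j+k))) lo hi ta tb"
      using LF[of 1] len by auto
    then have lt: "?ea < ?eb" and b1: "str ! (?ea - 1) = w0!(lo-1)" and b2: "str ! (?eb - 1) = w0!(hi-1)"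
      using hs agr[OF a'(1)] iN unfolding leafc_def
      by (auto simp: eqH_sat sbH_sat ltH_sat)
    have t1: "?ea + 1 \<in> {1..n}" using lt ev by auto
    obtain a'' where a'': "(\<forall>v<B+3*j. a'' v = a v)" "a'' (B+3*(j+k)) = ?ea + 1"
      "leafc (ltH N (sat str a'')) (eqH N (sat str a'')) (sbH N (sat str a'')) w0 (FVar (B+3*(j+k))) lo hi ta tb"
      using LF[OF t1] by blast
    then have "\<not> (?ea < ?ea + 1 \<and> ?ea + 1 < ?eb)"
      using hs agr[OF a''(1)] iN tN unfolding leafc_def
      by (auto simp: eqH_sat sbH_sat ltH_sat)
    then have eq: "?ea + 1 = ?eb" using lt by auto
    show ?thesis
    proof (intro conjI allI impI)
      show "?ea + (hi - lo) = ?eb" using eq hs by simp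
      fix i assume "i \<le> hi - lo"
      then have "i = 0 \<or> i = 1" using hs by auto
      then show "str ! (?ea + i - 1) = w0 ! (lo + i - 1)"
      proof
        assume "i = 0" then show ?thesis using b1 by simp
      next
        assume "i = 1" then show ?thesis using b2 eq hs ev by simp
      qed
    qed
  qed
qed



lemma split_arith:
  assumes "\<not> hi \<le> Suc lo" "hi - lo \<le> 3 ^ Suc k"
  shows "1 \<le> s1 (hi-lo)" "1 \<le> s2 (hi-lo)" "s1 (hi-lo) + s2 (hi-lo) \<le> hi - lo"
    "s1 (hi-lo) \<le> 3^k" "s2 (hi-lo) \<le> 3^k" "hi - lo - s1 (hi-lo) - s2 (hi-lo) \<le> 3^k"
proof -
  let ?l = "hi - lo"
  have l2: "?l \<ge> 2" using assms(1) by auto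
  have l3: "?l \<le> 3 * 3^k" using assms(2) by simp
  show "1 \<le> s1 ?l" "1 \<le> s2 ?l" "s1 ?l + s2 ?l \<le> ?l"
    using l2 unfolding s1_def s2_def by auto
  show "s1 ?l \<le> 3^k" "s2 ?l \<le> 3^k" "?l - s1 ?l - s2 ?l \<le> 3^k"
    using l2 l3 unfolding s1_def s2_def by auto
qed



lemma sound:
  assumes N: "N = B + 3*m + 1" and len: "length str = n" "1 \<le> n"
  shows "j + k = m \<Longrightarrow> 1 \<le> lo \<Longrightarrow> lo \<le> hi \<Longrightarrow> hi \<le> n \<Longrightarrow> hi - lo \<le> 3^k \<Longrightarrow>
    inT (B+3*j) ta \<Longrightarrow> inT (B+3*j) tb \<Longrightarrow> 1 \<le> eval_term str a ta \<Longrightarrow> eval_term str a tb \<le> n \<Longrightarrow>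
    (\<forall>a'. (\<forall>v<B+3*j. a' v = a v) \<longrightarrow> sat str a' \<psi> = walkS N str a' w0 B j k lo hi ta tb) \<Longrightarrow>
    sat str a (lev B j k \<psi>) \<Longrightarrow>
    eval_term str a ta + (hi-lo) = eval_term str a tb \<and> (\<forall>i\<le>hi-lo. str!(eval_term str a ta + i - 1) = w0!(lo+i-1))"
proof (induction k arbitrary: j a lo hi ta tb)
  case 0
  have "hi \<le> Suc lo" using "0.prems"(5) by simp
  then show ?case by (rule sound_leaf[OF N len "0.prems"(1,2,3) _ "0.prems"(6-11)])
next
  case (Suc k)
  show ?case
  proof (cases "hi \<le> Suc lo")
    case True
    then show ?thesis by (rule sound_leaf[OF N len Suc.prems(1,2,3) _ Suc.prems(6-11)])
  next
    case False
    note sa = split_arith[OF False Suc.prems(5)]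
    define l1 where "l1 = s1 (hi-lo)"
    define l2 where "l2 = s2 (hi-lo)"
    define X where "X = B+3*j"
    let ?ea = "eval_term str a ta" and ?eb = "eval_term str a tb"
    from Suc.prems(11) obtain x y where xy: "x \<in> {1..n}" "y \<in> {1..n}"
      "\<forall>u\<in>{1..n}. sat str (a(X := x, X+1 := y, X+2 := u)) (lev B (Suc j) k \<psi>)"
      using len unfolding X_def by (auto simp del: fun_upd_apply)
    define a1 where "a1 u = a(X := x, X+1 := y, X+2 := u)" for u
    have jm: "B + 3*j + 3 \<le> N" using N Suc.prems(1) by simp
    have Mc: "sat str a' \<psi> =
     (?ea < x \<and> x < y \<and> y \<le> ?eb \<and>
       (if u = ?ea then walkS N str a' w0 B (Suc j) k lo (lo + l1) ta (FVar X)
        else if u = x then walkS N str a' w0 B (Suc j) k (lo + l1) (lo + l1 + l2) (FVar X) (FVar (X+1))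
        else if u = y then walkS N str a' w0 B (Suc j) k (lo + l1 + l2) hi (FVar (X+1)) tb
        else True))"
      if "\<forall>v<B+3*Suc j. a' v = a1 u v" for u a'
    proof -
      have "\<forall>v<B+3*j. a' v = a v" using that unfolding a1_def X_def by auto
      then have "sat str a' \<psi> = walkS N str a' w0 B j (Suc k) lo hi ta tb" using Suc.prems(10) by blast
      also have "\<dots> = (?ea < x \<and> x < y \<and> y \<le> ?eb \<and>
       (if u = ?ea then walkS N str a' w0 B (Suc j) k lo (lo + l1) ta (FVar X)
        else if u = x then walkS N str a' w0 B (Suc j) k (lo + l1) (lo + l1 + l2) (FVar X) (FVar (X+1))
        else if u = y then walkS N str a' w0 B (Suc j) k (lo + l1 + l2) hi (FVar (X+1)) tb
        else True))"
        unfolding l1_def l2_def X_def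
        by (rule walk_step[OF False Suc.prems(6,7) jm]) (use that in \<open>auto simp: a1_def X_def\<close>)
      finally show ?thesis .
    qed
    have s1: "sat str (a1 u) (lev B (Suc j) k \<psi>)" if "u \<in> {1..n}" for u
      using xy(3) that unfolding a1_def by blast
    have valid: "?ea < x \<and> x < y \<and> y \<le> ?eb"
    proof -
      obtain a' where a': "(\<forall>v < B+3*Suc j. a' v = a1 1 v)" "sat str a' \<psi>"
        using lev_ex[OF s1[of 1]] len by (metis atLeastAtMost_iff le_refl)
      show ?thesis using Mc[OF a'(1)] a'(2) by simp
    qed
    have ag1: "eval_term str (a1 u) t = eval_term str a t" if "inT (B+3*j) t" for u t
      by (rule ev_agree[OF that]) (auto simp: a1_def X_def)
    have tvS: "inT (B+3*Suc j) ta" "inT (B+3*Suc j) tb" using Suc.prems(6,7) inT_mono[of "B+3*j" _ "B+3*Suc j"] by simp_all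
    have vX: "eval_term str (a1 u) (FVar X) = x" "eval_term str (a1 u) (FVar (X+1)) = y" for u
      by (auto simp: a1_def)
    have iX: "inT (B+3*Suc j) (FVar X)" "inT (B+3*Suc j) (FVar (X+1))" unfolding X_def by auto
    have u1: "?ea \<in> {1..n}" using Suc.prems(8) valid xy by auto
    have c1: "eval_term str (a1 ?ea) ta + (lo + l1 - lo) = eval_term str (a1 ?ea) (FVar X) \<and>
        (\<forall>i\<le>lo + l1 - lo. str!(eval_term str (a1 ?ea) ta + i - 1) = w0!(lo+i-1))"
    proof (rule Suc.IH)
      show "\<forall>a'. (\<forall>v<B + 3 * Suc j. a' v = a1 ?ea v) \<longrightarrow>
          sat str a' \<psi> = walkS N str a' w0 B (Suc j) k lo (lo + l1) ta (FVar X)"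
        using Mc valid by (intro allI impI) (simp only: Mc, simp)
    next show "Suc j + k = m" using Suc.prems(1) by simp
    next show "1 \<le> lo" using Suc.prems(2) .
    next show "lo \<le> lo + l1" by simp
    next show "lo + l1 \<le> n" using sa(3) Suc.prems(3,4) unfolding l1_def by linarith
    next show "lo + l1 - lo \<le> 3^k" using sa(4) unfolding l1_def by simp
    next show "inT (B+3*Suc j) ta" by (rule tvS(1))
    next show "inT (B+3*Suc j) (FVar X)" by (rule iX(1))
    next show "1 \<le> eval_term str (a1 ?ea) ta" using ag1[OF Suc.prems(6)] Suc.prems(8) by simp
    next show "eval_term str (a1 ?ea) (FVar X) \<le> n" using vX xy by simp
    next show "sat str (a1 ?ea) (lev B (Suc j) k \<psi>)" by (rule s1[OF u1])
    qed
    have u2: "x \<in> {1..n}" using xy by auto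
    have c2: "eval_term str (a1 x) (FVar X) + (lo + l1 + l2 - (lo + l1)) = eval_term str (a1 x) (FVar (X+1)) \<and>
        (\<forall>i\<le>lo + l1 + l2 - (lo + l1). str!(eval_term str (a1 x) (FVar X) + i - 1) = w0!(lo + l1 +i-1))"
    proof (rule Suc.IH)
      show "\<forall>a'. (\<forall>v<B + 3 * Suc j. a' v = a1 x v) \<longrightarrow>
          sat str a' \<psi> = walkS N str a' w0 B (Suc j) k (lo + l1) (lo + l1 + l2) (FVar X) (FVar (X+1))"
        using Mc valid by (intro allI impI) (simp only: Mc, simp)
    next show "Suc j + k = m" using Suc.prems(1) by simp
    next show "1 \<le> lo + l1" using Suc.prems(2) by simp
    next show "lo + l1 \<le> lo + l1 + l2" by simp
    next show "lo + l1 + l2 \<le> n" using sa(3) Suc.prems(3,4) unfolding l1_def l2_def by linarith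
    next show "lo + l1 + l2 - (lo + l1) \<le> 3^k" using sa(5) unfolding l2_def by simp
    next show "inT (B+3*Suc j) (FVar X)" by (rule iX(1))
    next show "inT (B+3*Suc j) (FVar (X+1))" by (rule iX(2))
    next show "1 \<le> eval_term str (a1 x) (FVar X)" using vX xy by simp
    next show "eval_term str (a1 x) (FVar (X+1)) \<le> n" using vX xy by simp
    next show "sat str (a1 x) (lev B (Suc j) k \<psi>)" by (rule s1[OF u2])
    qed
    have u3: "y \<in> {1..n}" using xy by auto
    have c3: "eval_term str (a1 y) (FVar (X+1)) + (hi - (lo + l1 + l2)) = eval_term str (a1 y) tb \<and>
        (\<forall>i\<le>hi - (lo + l1 + l2). str!(eval_term str (a1 y) (FVar (X+1)) + i - 1) = w0!(lo + l1 + l2 +i-1))"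
    proof (rule Suc.IH)
      show "\<forall>a'. (\<forall>v<B + 3 * Suc j. a' v = a1 y v) \<longrightarrow>
          sat str a' \<psi> = walkS N str a' w0 B (Suc j) k (lo + l1 + l2) hi (FVar (X+1)) tb"
        using Mc valid by (intro allI impI) (simp only: Mc, simp)
    next show "Suc j + k = m" using Suc.prems(1) by simp
    next show "1 \<le> lo + l1 + l2" using Suc.prems(2) by simp
    next show "lo + l1 + l2 \<le> hi" using sa(3) Suc.prems(3) unfolding l1_def l2_def by linarith
    next show "hi \<le> n" using Suc.prems(4) .
    next show "hi - (lo + l1 + l2) \<le> 3^k" using sa(6) unfolding l1_def l2_def by simp
    next show "inT (B+3*Suc j) (FVar (X+1))" by (rule iX(2))
    next show "inT (B+3*Suc j) tb" by (rule tvS(2))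
    next show "1 \<le> eval_term str (a1 y) (FVar (X+1))" using vX xy by simp
    next show "eval_term str (a1 y) tb \<le> n" using ag1[OF Suc.prems(7)] Suc.prems(9) by simp
    next show "sat str (a1 y) (lev B (Suc j) k \<psi>)" by (rule s1[OF u3])
    qed
    have e1: "?ea + l1 = x" and b1: "\<forall>i\<le>l1. str!(?ea + i - 1) = w0!(lo+i-1)"
      using c1 ag1[OF Suc.prems(6)] vX by auto
    have e2: "x + l2 = y" and b2: "\<forall>i\<le>l2. str!(x + i - 1) = w0!(lo + l1 + i-1)"
      using c2 vX by auto
    have e3: "y + (hi - (lo + l1 + l2)) = ?eb" and b3: "\<forall>i\<le>hi - (lo + l1 + l2). str!(y + i - 1) = w0!(lo + l1 + l2 + i-1)"
      using c3 ag1[OF Suc.prems(7)] vX by auto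
    have sl: "l1 + l2 \<le> hi - lo" using sa unfolding l1_def l2_def by simp
    show ?thesis
    proof (intro conjI allI impI)
      show "?ea + (hi - lo) = ?eb" using e1 e2 e3 sl Suc.prems(3) by linarith
      fix i assume i: "i \<le> hi - lo"
      show "str ! (?ea + i - 1) = w0 ! (lo + i - 1)"
      proof (cases "i \<le> l1")
        case True then show ?thesis using b1 by blast
      next
        case F1: False
        show ?thesis
        proof (cases "i \<le> l1 + l2")
          case True
          then have "str!(x + (i - l1) - 1) = w0!(lo + l1 + (i - l1) -1)" using F1 by (intro b2[rule_format]) simp
          moreover have "x + (i - l1) - 1 = ?ea + i - 1" using e1 F1 by simp
          moreover have "lo + l1 + (i - l1) - 1 = lo + i - 1" using F1 by simp
          ultimately show ?thesis by simp
        next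
          case False
          then have "str!(y + (i - l1 - l2) - 1) = w0!(lo + l1 + l2 + (i - l1 - l2) -1)"
            using i sl by (intro b3[rule_format]) linarith
          moreover have "y + (i - l1 - l2) - 1 = ?ea + i - 1" using e1 e2 False by simp
          moreover have "lo + l1 + l2 + (i - l1 - l2) - 1 = lo + i - 1" using False by simp
          ultimately show ?thesis by simp
        qed
      qed
    qed
  qed
qed



lemma complete_leaf:
  assumes N: "N = B + 3*m + 1" and len: "length str = n" "1 \<le> n"
    and jk: "j + k = m" and lh: "1 \<le> lo" "lo \<le> hi" "hi \<le> Suc lo" "hi \<le> n"
    and tv: "inT (B+3*j) ta" "inT (B+3*j) tb" and ev: "eval_term str a ta = lo" "eval_term str a tb = hi"
    and M: "\<forall>a'. (\<forall>v<B+3*j. a' v = a v) \<longrightarrow> sat str a' \<psi> = walkS N str a' str B j k lo hi ta tb"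
  shows "sat str a (lev B j k \<psi>)"
proof (rule lev_all)
  show "1 \<le> length str" using len by simp
  have "B+3*j \<le> N" using N jk by simp
  then have iN: "inT N ta" "inT N tb" using tv inT_mono by blast+
  have tN: "B+3*(j+k) < N" using N jk by simp
  show "\<forall>a'. (\<forall>v < B+3*j. a' v = a v) \<longrightarrow> sat str a' \<psi>"
  proof (intro allI impI)
    fix a' assume ag: "\<forall>v < B+3*j. a' v = a v"
    have e: "eval_term str a' ta = lo" "eval_term str a' tb = hi"
      using ev_agree[OF tv(1) ag] ev_agree[OF tv(2) ag] ev by auto
    have "leafc (ltH N (sat str a')) (eqH N (sat str a')) (sbH N (sat str a')) str (FVar (B+3*(j+k))) lo hi ta tb"
      unfolding leafc_def using e iN tN lh by (auto simp: ltH_sat eqH_sat sbH_sat)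
    then have "walkS N str a' str B j k lo hi ta tb"
      unfolding walkS_def walk_leaf[OF lh(3)] .
    then show "sat str a' \<psi>" using M ag by blast
  qed
qed

lemma complete:
  assumes N: "N = B + 3*m + 1" and len: "length str = n" "1 \<le> n"
  shows "j + k = m \<Longrightarrow> 1 \<le> lo \<Longrightarrow> lo \<le> hi \<Longrightarrow> hi \<le> n \<Longrightarrow> hi - lo \<le> 3^k \<Longrightarrow>
    inT (B+3*j) ta \<Longrightarrow> inT (B+3*j) tb \<Longrightarrow> eval_term str a ta = lo \<Longrightarrow> eval_term str a tb = hi \<Longrightarrow>
    (\<forall>a'. (\<forall>v<B+3*j. a' v = a v) \<longrightarrow> sat str a' \<psi> = walkS N str a' str B j k lo hi ta tb) \<Longrightarrow>
    sat str a (lev B j k \<psi>)"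
proof (induction k arbitrary: j a lo hi ta tb)
  case 0
  have "hi \<le> Suc lo" using "0.prems"(5) by simp
  then show ?case by (rule complete_leaf[OF N len "0.prems"(1,2,3) _ "0.prems"(4,6-10)])
next
  case (Suc k)
  show ?case
  proof (cases "hi \<le> Suc lo")
    case True
    then show ?thesis by (rule complete_leaf[OF N len Suc.prems(1,2,3) _ Suc.prems(4,6-10)])
  next
    case False
    note sa = split_arith[OF False Suc.prems(5)]
    define l1 where "l1 = s1 (hi-lo)"
    define l2 where "l2 = s2 (hi-lo)"
    define X where "X = B+3*j"
    define x where "x = lo + l1"
    define y where "y = lo + l1 + l2"
    define a1 where "a1 u = a(X := x, X+1 := y, X+2 := u)" for u
    have jm: "B + 3*j + 3 \<le> N" using N Suc.prems(1) by simp
    have sl: "l1 + l2 \<le> hi - lo" "1 \<le> l1" "1 \<le> l2" using sa unfolding l1_def l2_def by auto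
    have valid: "lo < x" "x < y" "y \<le> hi" using sl Suc.prems(3) unfolding x_def y_def by auto
    have Mc: "sat str a' \<psi> =
       (if u = lo then walkS N str a' str B (Suc j) k lo x ta (FVar X)
        else if u = x then walkS N str a' str B (Suc j) k x y (FVar X) (FVar (X+1))
        else if u = y then walkS N str a' str B (Suc j) k y hi (FVar (X+1)) tb
        else True)"
      if "\<forall>v<B+3*Suc j. a' v = a1 u v" for u a'
    proof -
      have "\<forall>v<B+3*j. a' v = a v" using that unfolding a1_def X_def by auto
      then have "sat str a' \<psi> = walkS N str a' str B j (Suc k) lo hi ta tb" using Suc.prems(10) by blast
      also have "\<dots> = (eval_term str a ta < x \<and> x < y \<and> y \<le> eval_term str a tb \<and>
       (if u = eval_term str a ta then walkS N str a' str B (Suc j) k lo (lo + l1) ta (FVar X)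
        else if u = x then walkS N str a' str B (Suc j) k (lo + l1) (lo + l1 + l2) (FVar X) (FVar (X+1))
        else if u = y then walkS N str a' str B (Suc j) k (lo + l1 + l2) hi (FVar (X+1)) tb
        else True))"
        unfolding l1_def l2_def X_def
        by (rule walk_step[OF False Suc.prems(6,7) jm]) (use that in \<open>auto simp: a1_def X_def\<close>)
      finally show ?thesis using valid Suc.prems(8,9) unfolding x_def y_def by simp
    qed
    have ag1: "eval_term str (a1 u) t = eval_term str a t" if "inT (B+3*j) t" for u t
      by (rule ev_agree[OF that]) (auto simp: a1_def X_def)
    have tvS: "inT (B+3*Suc j) ta" "inT (B+3*Suc j) tb" using Suc.prems(6,7) inT_mono[of "B+3*j" _ "B+3*Suc j"] by simp_all
    have vX: "eval_term str (a1 u) (FVar X) = x" "eval_term str (a1 u) (FVar (X+1)) = y" for u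
      by (auto simp: a1_def)
    have iX: "inT (B+3*Suc j) (FVar X)" "inT (B+3*Suc j) (FVar (X+1))" unfolding X_def by auto
    have lok: "1 \<le> lo" "lo \<le> x" "x \<le> y" "y \<le> hi" "hi \<le> n" using valid Suc.prems(2,4) by auto
    have bnd: "x - lo \<le> 3^k" "y - x \<le> 3^k" "hi - y \<le> 3^k"
      using sa unfolding x_def y_def l1_def l2_def by auto
    have jS: "Suc j + k = m" using Suc.prems(1) by simp
    have all: "sat str (a1 u) (lev B (Suc j) k \<psi>)" if "u \<in> {1..n}" for u
    proof -
      consider "u = lo" | "u \<noteq> lo" "u = x" | "u \<noteq> lo" "u \<noteq> x" "u = y" | "u \<noteq> lo" "u \<noteq> x" "u \<noteq> y" by blast
      then show ?thesis
      proof cases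
        case 1
        show ?thesis
        proof (rule Suc.IH[OF jS lok(1) lok(2) _ bnd(1) tvS(1) iX(1)])
          show "x \<le> n" using lok by simp
          show "eval_term str (a1 u) ta = lo" using ag1[OF Suc.prems(6)] Suc.prems(8) by simp
          show "eval_term str (a1 u) (FVar X) = x" by (rule vX(1))
          show "\<forall>a'. (\<forall>v<B + 3 * Suc j. a' v = a1 u v) \<longrightarrow>
              sat str a' \<psi> = walkS N str a' str B (Suc j) k lo x ta (FVar X)"
            using Mc 1 valid by (intro allI impI) (simp only: Mc, simp)
        qed
      next
        case 2
        show ?thesis
        proof (rule Suc.IH[OF jS _ lok(3) _ bnd(2) iX(1) iX(2)])
          show "1 \<le> x" "y \<le> n" using lok by auto
          show "eval_term str (a1 u) (FVar X) = x" by (rule vX(1))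
          show "eval_term str (a1 u) (FVar (X+1)) = y" by (rule vX(2))
          show "\<forall>a'. (\<forall>v<B + 3 * Suc j. a' v = a1 u v) \<longrightarrow>
              sat str a' \<psi> = walkS N str a' str B (Suc j) k x y (FVar X) (FVar (X+1))"
            using Mc 2 valid by (intro allI impI) (simp only: Mc, simp)
        qed
      next
        case 3
        show ?thesis
        proof (rule Suc.IH[OF jS _ lok(4) lok(5) bnd(3) iX(2) tvS(2)])
          show "1 \<le> y" using lok by auto
          show "eval_term str (a1 u) (FVar (X+1)) = y" by (rule vX(2))
          show "eval_term str (a1 u) tb = hi" using ag1[OF Suc.prems(7)] Suc.prems(9) by simp
          show "\<forall>a'. (\<forall>v<B + 3 * Suc j. a' v = a1 u v) \<longrightarrow>
              sat str a' \<psi> = walkS N str a' str B (Suc j) k y hi (FVar (X+1)) tb"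
            using Mc 3 valid by (intro allI impI) (simp only: Mc, simp)
        qed
      next
        case 4
        show ?thesis
        proof (rule lev_all)
          show "1 \<le> length str" using len by simp
          show "\<forall>a'. (\<forall>v<B + 3 * Suc j. a' v = a1 u v) \<longrightarrow> sat str a' \<psi>"
            using Mc 4 valid by (intro allI impI) (simp only: Mc, simp)
        qed
      qed
    qed
    have xn: "x \<in> {1..length str}" "y \<in> {1..length str}" using lok len by auto
    show ?thesis
      unfolding lev.simps sat.simps
      apply (rule bexI[OF _ xn(1)], rule bexI[OF _ xn(2)])
      using all len unfolding a1_def X_def by simp
  qed
qed



lemma lenlists_finite: "finite {w :: bool list. length w = n}"
  using finite_lists_length_eq[of "UNIV :: bool set" n] by simp

lemma lenlists_card: "card {w :: bool list. length w = n} = 2^n"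
proof -
  have "card {xs::bool list. set xs \<subseteq> UNIV \<and> length xs = n} = card (UNIV::bool set)^n"
    by (rule card_lists_length_eq) simp
  then show ?thesis by simp
qed

lemma chain_mono: "(\<forall>j. Suc j < s \<longrightarrow> (f::nat\<Rightarrow>nat) j < f (Suc j)) \<Longrightarrow> i < j \<Longrightarrow> j < s \<Longrightarrow> f i < f j"
proof (induction j)
  case 0 then show ?case by simp
next
  case (Suc j)
  show ?case
  proof (cases "i = j")
    case True then show ?thesis using Suc by auto
  next
    case False then have "f i < f j" using Suc by auto
    then show ?thesis using Suc.prems(1,3) by (meson less_trans)
  qed
qed

lemma construct:
  fixes A :: "bool list set"
  assumes n1: "1 \<le> n" and sn: "s \<le> n" and cA: "card A \<le> s^q" and As: "A \<subseteq> {w. length w = n}"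
    and nm: "n - 1 \<le> 3^m"
  shows "\<exists>\<phi>. is_sentence \<phi> \<and> num_quant \<phi> = s + q + 3*m + 1 \<and> (\<forall>w\<in>A. models w \<phi>)
             \<and> (\<forall>w'. length w' = n \<and> w' \<notin> A \<longrightarrow> \<not> models w' \<phi>)"
proof -
  have fA: "finite A" using As lenlists_finite finite_subset by blast
  let ?P = "PiE {..<q} (\<lambda>_. {..<s})"
  have "card ?P = s^q" by (simp add: card_PiE)
  then obtain c where c: "c ` A \<subseteq> ?P" "inj_on c A"
    using card_le_inj[OF fA _ ] cA by (metis finite_PiE finite_lessThan)
  define code where "code w i = c w i" for w i
  have code_lt: "code w i < s" if "w \<in> A" "i < q" for w i
    using c(1) that unfolding code_def by (auto simp: PiE_iff)
  have code_inj: "w = w'" if "w \<in> A" "w' \<in> A" "\<forall>i<q. code w i = code w' i" for w w'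
  proof -
    have "c w = c w'" using c(1) that by (intro PiE_ext[of _ "{..<q}" "\<lambda>_. {..<s}"]) (auto simp: code_def)
    then show ?thesis using c(2) that by (meson inj_onD)
  qed
  define B where "B = s + q"
  define N where "N = B + 3*m + 1"
  obtain \<psi> where psi: "num_quant \<psi> = 0" "free_vars \<psi> \<subseteq> {..<N}"
    "\<forall>w a. sat w a \<psi> = Chk s q A code m n (ltH N (sat w a)) (eqH N (sat w a)) (sbH N (sat w a))"
    using matrix_exists by blast
  define \<phi> where "\<phi> = exs [0..<B] (lev B 0 m \<psi>)"
  have sent: "is_sentence \<phi>"
  proof -
    have "free_vars (lev B 0 m \<psi>) \<subseteq> free_vars \<psi> - {B ..< B+3*m+1}" using lev_fv[of B 0 m \<psi>] by simp
    have "free_vars (lev B 0 m \<psi>) \<subseteq> {..<B}"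
    proof
      fix x assume "x \<in> free_vars (lev B 0 m \<psi>)"
      then have "x \<in> free_vars \<psi>" "x \<notin> {B ..< B+3*m+1}" using \<open>free_vars (lev B 0 m \<psi>) \<subseteq> _\<close> by blast+
      then have "x < N" "x \<notin> {B ..< B+3*m+1}" using psi(2) by blast+
      then show "x \<in> {..<B}" unfolding N_def by auto
    qed
    then show ?thesis unfolding is_sentence_def \<phi>_def by auto
  qed
  have nq: "num_quant \<phi> = s + q + 3*m + 1" unfolding \<phi>_def B_def using psi(1) by simp
  have Msem: "sat str a' \<psi> = walkS N str a' w0 B 0 m 1 n FMin FMax"
    if refs: "\<forall>j. Suc j < s \<longrightarrow> a' j < a' (Suc j)" and w0: "w0 \<in> A"
      and sel: "\<forall>i<q. a' (s+i) = a' (code w0 i)" for str a' w0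
  proof -
    have iN: "\<And>i. i < B \<Longrightarrow> i < N" unfolding N_def by simp
    have r: "\<forall>j. Suc j < s \<longrightarrow> ltH N (sat str a') (FVar j) (FVar (Suc j))"
      using refs iN unfolding B_def by (auto simp: ltH_sat)
    have selw: "(\<forall>i<q. eqH N (sat str a') (FVar (s+i)) (FVar (code w i))) \<longleftrightarrow> w = w0" if "w \<in> A" for w
    proof
      assume "\<forall>i<q. eqH N (sat str a') (FVar (s+i)) (FVar (code w i))"
      then have "\<forall>i<q. a' (code w i) = a' (code w0 i)" using sel by (auto simp: eqH_sat)
      then have "\<forall>i<q. code w i = code w0 i"
      proof (intro allI impI)
        fix i assume eqs: "\<forall>i<q. a' (code w i) = a' (code w0 i)" and i: "i < q"
        have c1: "code w i < s" "code w0 i < s" using code_lt[OF that i] code_lt[OF w0 i] by auto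
        have e: "a' (code w i) = a' (code w0 i)" using eqs i by blast
        show "code w i = code w0 i"
        proof (rule ccontr)
          assume "code w i \<noteq> code w0 i"
          then consider "code w i < code w0 i" | "code w0 i < code w i" by linarith
          then show False
          proof cases
            case 1 then show False using chain_mono[OF refs 1 c1(2)] e by simp
          next
            case 2 then show False using chain_mono[OF refs 2 c1(1)] e by simp
          qed
        qed
      qed
      then show "w = w0" using code_inj[OF that w0] by blast
    next
      assume "w = w0"
      then show "\<forall>i<q. eqH N (sat str a') (FVar (s+i)) (FVar (code w i))"
      proof (intro allI impI)
        fix i assume "w = w0" "i < q"
        have "code w0 i < s" using code_lt[OF w0 \<open>i < q\<close>] .
        then have "code w i < N" "s + i < N" using iN[of "code w0 i"] iN[of "s+i"] \<open>i < q\<close> \<open>w = w0\<close>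
          unfolding B_def by simp_all
        then show "eqH N (sat str a') (FVar (s+i)) (FVar (code w i))"
          using sel \<open>w = w0\<close> \<open>i < q\<close> by (auto simp: eqH_sat)
      qed
    qed
    let ?W = "\<lambda>w. walk (ltH N (sat str a')) (eqH N (sat str a')) (sbH N (sat str a')) w (s+q) 0 m 1 n FMin FMax"
    have "sat str a' \<psi> = Chk s q A code m n (ltH N (sat str a')) (eqH N (sat str a')) (sbH N (sat str a'))"
      using psi(3) by blast
    also have "\<dots> = (\<exists>w\<in>A. (\<forall>i<q. eqH N (sat str a') (FVar (s+i)) (FVar (code w i))) \<and> ?W w)"
      unfolding Chk_def using r by simp
    also have "\<dots> = ?W w0" using selw w0 by blast
    finally show ?thesis unfolding walkS_def B_def .
  qed
  show ?thesis
  proof (intro exI conjI allI impI ballI)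
    show "is_sentence \<phi>" by (rule sent)
    show "num_quant \<phi> = s + q + 3*m + 1" by (rule nq)
  next
    fix w0 assume w0: "w0 \<in> A"
    have len: "length w0 = n" using As w0 by auto
    define b where "b v = (if v < s then v+1 else if v < B then code w0 (v-s) + 1 else 1)" for v
    have "sat w0 b (lev B 0 m \<psi>)"
    proof (rule complete[OF N_def len n1])
      show "0 + m = m" "1 \<le> (1::nat)" "1 \<le> n" "n \<le> n" "n - 1 \<le> 3^m" using n1 nm by auto
      show "inT (B+3*0) FMin" "inT (B+3*0) FMax" by auto
      show "eval_term w0 b FMin = 1" "eval_term w0 b FMax = n" using len by auto
      show "\<forall>a'. (\<forall>v<B + 3 * 0. a' v = b v) \<longrightarrow> sat w0 a' \<psi> = walkS N w0 a' w0 B 0 m 1 n FMin FMax"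
      proof (intro allI impI)
        fix a' assume ag: "\<forall>v<B + 3 * 0. a' v = b v"
        show "sat w0 a' \<psi> = walkS N w0 a' w0 B 0 m 1 n FMin FMax"
        proof (rule Msem[OF _ w0])
          show "\<forall>j. Suc j < s \<longrightarrow> a' j < a' (Suc j)" using ag unfolding b_def B_def by auto
          show "\<forall>i<q. a' (s+i) = a' (code w0 i)"
          proof (intro allI impI)
            fix i assume i: "i < q"
            have c: "code w0 i < s" using code_lt[OF w0 i] .
            have "a' (s+i) = code w0 i + 1" using ag i unfolding b_def B_def by simp
            moreover have "a' (code w0 i) = code w0 i + 1" using ag c unfolding b_def B_def by simp
            ultimately show "a' (s+i) = a' (code w0 i)" by simp
          qed
        qed
      qed
    qed
    then show "models w0 \<phi>" unfolding models_def \<phi>_def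
    proof (rule exs_intro)
      show "\<forall>v\<in>set [0..<B]. b v \<in> {1..length w0}"
      proof
        fix v assume "v \<in> set [0..<B]"
        then have v: "v < s + q" unfolding B_def by simp
        show "b v \<in> {1..length w0}"
        proof (cases "v < s")
          case True then show ?thesis using sn len unfolding b_def by simp
        next
          case False
          then have "v - s < q" using v by simp
          then have "code w0 (v - s) < s" using code_lt[OF w0] by blast
          then show ?thesis using sn len False v unfolding b_def B_def by simp
        qed
      qed
      show "\<forall>v. v \<notin> set [0..<B] \<longrightarrow> b v = (\<lambda>_. 1) v" unfolding b_def B_def by simp
    qed
  next
    fix w' assume w': "length w' = n \<and> w' \<notin> A"
    show "\<not> models w' \<phi>"
    proof
      assume "models w' \<phi>"
      then obtain b where b: "\<forall>v. v \<notin> set [0..<B] \<longrightarrow> b v = (\<lambda>_. 1) v" "sat w' b (lev B 0 m \<psi>)"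
        unfolding models_def \<phi>_def using exs_elim by blast
      have l1: "1 \<le> length w'" "1 \<in> {1..length w'}" using w' n1 by auto
      from lev_ex[OF b(2) l1] obtain a' where a': "\<forall>v<B+3*0. a' v = b v" "sat w' a' \<psi>" by blast
      have iN: "\<And>i. i < B \<Longrightarrow> i < N" unfolding N_def by simp
      from a'(2) psi(3) obtain w0 where w0: "w0 \<in> A"
          "\<forall>i<q. eqH N (sat w' a') (FVar (s+i)) (FVar (code w0 i))"
        and refs: "\<forall>j. Suc j < s \<longrightarrow> ltH N (sat w' a') (FVar j) (FVar (Suc j))"
        unfolding Chk_def by blast
      have refsb: "\<forall>j. Suc j < s \<longrightarrow> b j < b (Suc j)"
        using refs a'(1) unfolding B_def by (auto simp: ltH_sat)
      have selb: "\<forall>i<q. b (s+i) = b (code w0 i)"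
      proof (intro allI impI)
        fix i assume i: "i < q"
        have c: "code w0 i < s" using code_lt[OF w0(1) i] .
        have "a' (s+i) = a' (code w0 i)" using w0(2) i by (auto simp: eqH_sat)
        moreover have "a' (s+i) = b (s+i)" "a' (code w0 i) = b (code w0 i)" using a'(1) c i unfolding B_def by auto
        ultimately show "b (s+i) = b (code w0 i)" by simp
      qed
      have "eval_term w' b FMin + (n - 1) = eval_term w' b FMax \<and>
          (\<forall>i\<le>n-1. w'!(eval_term w' b FMin + i - 1) = w0!(1+i-1))"
      proof (rule sound[OF N_def _ n1])
        show "length w' = n" using w' by simp
        show "0 + m = m" "1 \<le> (1::nat)" "1 \<le> n" "n \<le> n" "n - 1 \<le> 3^m" using n1 nm by auto
        show "inT (B+3*0) FMin" "inT (B+3*0) FMax" by auto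
        show "1 \<le> eval_term w' b FMin" "eval_term w' b FMax \<le> n" using w' by auto
        show "sat w' b (lev B 0 m \<psi>)" by (rule b(2))
        show "\<forall>a'. (\<forall>v<B + 3 * 0. a' v = b v) \<longrightarrow> sat w' a' \<psi> = walkS N w' a' w0 B 0 m 1 n FMin FMax"
        proof (intro allI impI)
          fix a'' assume ag: "\<forall>v<B + 3 * 0. a'' v = b v"
          show "sat w' a'' \<psi> = walkS N w' a'' w0 B 0 m 1 n FMin FMax"
          proof (rule Msem[OF _ w0(1)])
            show "\<forall>j. Suc j < s \<longrightarrow> a'' j < a'' (Suc j)" using ag refsb unfolding B_def by auto
            show "\<forall>i<q. a'' (s+i) = a'' (code w0 i)"
            proof (intro allI impI)
              fix i assume i: "i < q"
              have c: "code w0 i < s" using code_lt[OF w0(1) i] .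
              have "a'' (s+i) = b (s+i)" "a'' (code w0 i) = b (code w0 i)" using ag c i unfolding B_def by auto
              then show "a'' (s+i) = a'' (code w0 i)" using selb i by simp
            qed
          qed
        qed
      qed
      then have "\<forall>i<n. w'!i = w0!i" by auto
      moreover have "length w0 = n" using As w0(1) by auto
      ultimately have "w' = w0" using w' by (intro nth_equalityI) auto
      then show False using w' w0(1) by simp
    qed
  qed
qed



lemma poly_bound:
  fixes f :: "nat \<Rightarrow> nat"
  assumes "\<exists>k::real. (\<lambda>n. real (f n)) \<in> O(\<lambda>n. real n powr k)"
  shows "\<exists>K c N1. K \<ge> 1 \<and> c \<ge> 1 \<and> (\<forall>n\<ge>N1. real (f n) \<le> c * real n powr K)"
proof -
  obtain k where "(\<lambda>n. real (f n)) \<in> O(\<lambda>n. real n powr k)" using assms by blast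
  then obtain c where c: "c > 0" "eventually (\<lambda>n. norm (real (f n)) \<le> c * norm (real n powr k)) at_top"
    unfolding bigo_def by blast
  then obtain N1 where N1: "\<forall>n\<ge>N1. norm (real (f n)) \<le> c * norm (real n powr k)"
    unfolding eventually_at_top_linorder by blast
  define K where "K = max k 1"
  define c' where "c' = max c 1"
  have "\<forall>n\<ge>max N1 1. real (f n) \<le> c' * real n powr K"
  proof (intro allI impI)
    fix n assume n: "n \<ge> max N1 1"
    then have n1: "real n \<ge> 1" by simp
    have "real (f n) \<le> c * real n powr k" using N1 n by simp
    also have "\<dots> \<le> c * real n powr K"
      using c(1) n1 by (intro mult_left_mono powr_mono) (auto simp: K_def)
    also have "\<dots> \<le> c' * real n powr K"
      by (intro mult_right_mono) (auto simp: c'_def)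
    finally show "real (f n) \<le> c' * real n powr K" .
  qed
  then show ?thesis by (intro exI[of _ K] exI[of _ c'] exI[of _ "max N1 1"]) (auto simp: K_def c'_def)
qed

lemma m_bound:
  assumes "1 \<le> n"
  shows "n - 1 \<le> 3 ^ nat \<lceil>log 3 (real n)\<rceil>" "real (nat \<lceil>log 3 (real n)\<rceil>) \<le> log 3 (real n) + 1"
proof -
  have l0: "log 3 (real n) \<ge> 0" using assms by simp
  let ?m = "nat \<lceil>log 3 (real n)\<rceil>"
  have mr: "real ?m = real_of_int \<lceil>log 3 (real n)\<rceil>" using l0 by simp
  have "real n = 3 powr (log 3 (real n))" using assms by simp
  also have "\<dots> \<le> 3 powr (real ?m)" using mr by (intro powr_mono) auto
  also have "\<dots> = real (3 ^ ?m)" by (simp add: powr_realpow)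
  finally have "n \<le> 3 ^ ?m" by linarith
  then show "n - 1 \<le> 3 ^ ?m" by simp
  show "real ?m \<le> log 3 (real n) + 1" using mr by linarith
qed

lemma q_bound:
  assumes S: "S \<ge> (2::nat)" and x: "x \<ge> (1::real)"
  shows "x \<le> real (S ^ nat \<lceil>log S x\<rceil>)" "real (nat \<lceil>log S x\<rceil>) \<le> log S x + 1"
proof -
  have l0: "log S x \<ge> 0" using S x by simp
  let ?q = "nat \<lceil>log S x\<rceil>"
  have mr: "real ?q = real_of_int \<lceil>log S x\<rceil>" using l0 by simp
  have "x = real S powr (log S x)" using S x by simp
  also have "\<dots> \<le> real S powr (real ?q)" using mr S by (intro powr_mono) auto
  also have "\<dots> = real (S ^ ?q)" using S by (simp add: powr_realpow)
  finally show "x \<le> real (S ^ ?q)" .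
  show "real ?q \<le> log S x + 1" using mr by linarith
qed



lemma log_split:
  assumes S: "real S \<ge> 3 powr (2*K/\<epsilon>)" "S \<ge> (2::nat)" and e: "\<epsilon> > 0" and K: "K \<ge> 1" and c: "c \<ge> 1"
    and n: "n \<ge> (1::nat)"
  shows "log S (c * real n powr K) \<le> log S c + (\<epsilon>/2) * log 3 (real n)"
proof -
  have Sp: "real S > 1" using S(2) by simp
  have "log S (c * real n powr K) = log S c + K * log S (real n)"
    using c n Sp by (simp add: log_mult log_powr)
  also have "K * log S (real n) \<le> (\<epsilon>/2) * log 3 (real n)"
  proof -
    have lnS: "ln (real S) \<ge> (2*K/\<epsilon>) * ln 3"
    proof -
      have "ln (3 powr (2*K/\<epsilon>)) \<le> ln (real S)" using S Sp by (subst ln_le_cancel_iff) auto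
      then show ?thesis by (simp add: ln_powr)
    qed
    have lnn: "ln (real n) \<ge> 0" using n by simp
    have l3: "ln (3::real) > 0" by simp
    have lS: "ln (real S) > 0" using Sp by simp
    have "K * log S (real n) = K * ln (real n) / ln (real S)" by (simp add: log_def)
    also have "\<dots> \<le> (\<epsilon>/2) * ln (real n) / ln 3"
    proof -
      have "K * ln 3 \<le> (\<epsilon>/2) * ln (real S)" using lnS e by (simp add: field_simps)
      then have "K * ln (real n) * ln 3 \<le> (\<epsilon>/2) * ln (real n) * ln (real S)"
        using lnn by (metis mult.assoc mult.commute mult_left_mono)
      then show ?thesis using l3 lS by (simp add: field_simps)
    qed
    also have "\<dots> = (\<epsilon>/2) * log 3 (real n)" by (simp add: log_def)
    finally show ?thesis .
  qed
  finally show ?thesis by simp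
qed



theorem mainTheorem18:
  fixes f :: "nat \<Rightarrow> nat"
  assumes "filterlim f at_top sequentially"
    and "\<exists>k::real. (\<lambda>n. real (f n)) \<in> O(\<lambda>n. real n powr k)"
  shows "\<forall>\<epsilon>>0. \<exists>C::real. \<forall>n\<ge>1. \<forall>A. A \<subseteq> {w :: bool list. length w = n} \<longrightarrow> card A = f n \<longrightarrow>
           (\<exists>\<phi>. is_sentence \<phi> \<and> real (num_quant \<phi>) \<le> (3 + \<epsilon>) * log 3 (real n) + C
               \<and> (\<forall>w\<in>A. models w \<phi>)
               \<and> (\<forall>w'. length w' = n \<and> w' \<notin> A \<longrightarrow> \<not> models w' \<phi>))"
proof (intro allI impI)
  fix \<epsilon> :: real assume e: "\<epsilon> > 0"
  obtain K c N1 where Kc: "K \<ge> 1" "c \<ge> 1" "\<forall>n\<ge>N1. real (f n) \<le> c * real n powr K"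
    using poly_bound[OF assms(2)] by blast
  define S :: nat where "S = nat \<lceil>3 powr (2*K/\<epsilon>)\<rceil> + 2"
  have S2: "S \<ge> 2" unfolding S_def by simp
  have S3: "real S \<ge> 3 powr (2*K/\<epsilon>)" unfolding S_def by linarith
  define N0 where "N0 = max (max N1 S) 2"
  define C where "C = max (real S + log S c + 5) (real N0 + 6)"
  have Cnn: "C \<ge> 0" unfolding C_def by simp
  show "\<exists>C::real. \<forall>n\<ge>1. \<forall>A. A \<subseteq> {w :: bool list. length w = n} \<longrightarrow> card A = f n \<longrightarrow>
           (\<exists>\<phi>. is_sentence \<phi> \<and> real (num_quant \<phi>) \<le> (3 + \<epsilon>) * log 3 (real n) + C
               \<and> (\<forall>w\<in>A. models w \<phi>)
               \<and> (\<forall>w'. length w' = n \<and> w' \<notin> A \<longrightarrow> \<not> models w' \<phi>))"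
  proof (intro exI[of _ C] allI impI)
    fix n :: nat and A :: "bool list set"
    assume n1: "1 \<le> n" and As: "A \<subseteq> {w. length w = n}" and cA: "card A = f n"
    have l3: "log 3 (real n) \<ge> 0" using n1 by simp
    have el: "0 \<le> \<epsilon> * log 3 (real n)" using l3 e by simp
    have C1: "real S + log S c + 5 \<le> C" "real N0 + 6 \<le> C" unfolding C_def by auto
    define m where "m = nat \<lceil>log 3 (real n)\<rceil>"
    have mb: "n - 1 \<le> 3^m" "real m \<le> log 3 (real n) + 1" using m_bound[OF n1] unfolding m_def by auto
    show "\<exists>\<phi>. is_sentence \<phi> \<and> real (num_quant \<phi>) \<le> (3 + \<epsilon>) * log 3 (real n) + C
               \<and> (\<forall>w\<in>A. models w \<phi>)
               \<and> (\<forall>w'. length w' = n \<and> w' \<notin> A \<longrightarrow> \<not> models w' \<phi>)"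
    proof (cases "A = {w. length w = n}")
      case True
      show ?thesis
      proof (intro exI[of _ FTrue] conjI)
        show "is_sentence FTrue" by (simp add: is_sentence_def)
        show "real (num_quant FTrue) \<le> (3 + \<epsilon>) * log 3 (real n) + C" using l3 e Cnn by simp
        show "\<forall>w\<in>A. models w FTrue" by (simp add: models_def)
        show "\<forall>w'. length w' = n \<and> w' \<notin> A \<longrightarrow> \<not> models w' FTrue" using True by simp
      qed
    next
      case False
      then have psub: "A \<subset> {w. length w = n}" using As by blast
      have cl: "card A < 2^n" using psubset_card_mono[OF lenlists_finite psub] lenlists_card by simp
      show ?thesis
      proof (cases "n < N0")
        case True
        have sn: "min n 2 \<le> n" by simp
        have cq: "card A \<le> (min n 2)^n"
        proof (cases "n = 1")
          case True then show ?thesis using cl by simp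
        next
          case False then have "min n 2 = 2" using n1 by simp
          then show ?thesis using cl by simp
        qed
        obtain \<phi> where \<phi>: "is_sentence \<phi>" "num_quant \<phi> = min n 2 + n + 3*m + 1" "\<forall>w\<in>A. models w \<phi>"
            "\<forall>w'. length w' = n \<and> w' \<notin> A \<longrightarrow> \<not> models w' \<phi>"
          using construct[OF n1 sn cq As mb(1)] by blast
        have "real (num_quant \<phi>) \<le> 2 + real N0 + 3 * real m + 1"
          using \<phi>(2) True by simp
        also have "\<dots> \<le> 3 * log 3 (real n) + (real N0 + 6)" using mb(2) by simp
        also have "\<dots> \<le> (3 + \<epsilon>) * log 3 (real n) + C"
          using el C1 by (simp add: algebra_simps)
        finally show ?thesis using \<phi> by blast
      next
        case False
        then have nN: "n \<ge> N1" "n \<ge> S" unfolding N0_def by auto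
        define x where "x = c * real n powr K"
        have x1: "x \<ge> 1" unfolding x_def using Kc(2) n1
          by (metis ge_one_powr_ge_zero less_one linorder_not_le mult_le_cancel_left1 not_one_le_zero of_nat_1 of_nat_mono order.trans zero_le_one Kc(1))
        define q where "q = nat \<lceil>log S x\<rceil>"
        have qb: "x \<le> real (S ^ q)" "real q \<le> log S x + 1" using q_bound[OF S2 x1] unfolding q_def by auto
        have "real (card A) \<le> x" using cA Kc(3) nN(1) unfolding x_def by simp
        then have cq: "card A \<le> S ^ q" using qb(1) by linarith
        obtain \<phi> where \<phi>: "is_sentence \<phi>" "num_quant \<phi> = S + q + 3*m + 1" "\<forall>w\<in>A. models w \<phi>"
            "\<forall>w'. length w' = n \<and> w' \<notin> A \<longrightarrow> \<not> models w' \<phi>"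
          using construct[OF n1 nN(2) cq As mb(1)] by blast
        have ls: "log S x \<le> log S c + (\<epsilon>/2) * log 3 (real n)"
          unfolding x_def by (rule log_split[OF S3 S2 e Kc(1,2) n1])
        have "real (num_quant \<phi>) = real S + real q + 3 * real m + 1" using \<phi>(2) by simp
        also have "\<dots> \<le> real S + (log S c + (\<epsilon>/2) * log 3 (real n) + 1) + 3 * (log 3 (real n) + 1) + 1"
        proof -
          have "real q \<le> log S c + (\<epsilon>/2) * log 3 (real n) + 1" using qb(2) ls by linarith
          moreover have "3 * real m \<le> 3 * (log 3 (real n) + 1)" using mult_left_mono[OF mb(2), of 3] by simp
          ultimately show ?thesis by linarith
        qed
        also have "\<dots> \<le> (3 + \<epsilon>) * log 3 (real n) + C"
          using el C1 by (simp add: algebra_simps)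
        finally show ?thesis using \<phi> by blast
      qed
    qed
  qed
qed


end
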